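(* Suppose $\rho^w$ and $\rho^b$ are convex risk measures. Then an equal risk price without commitment exists if and only if the fair price interval $[-\varrho^b_\tau(0),\ \varrho^w_\tau(0)]$ is bounded. Moreover, when it exists it equals the center of this interval, $p_0^*=(\varrho^w_\tau(0)-\varrho^b_\tau(0))/2$.
   Context: Discrete-time setting: filtered probability space $(\Omega,\mathcal{F},(\mathcal{F}_t),\mathbb{P})$, zero interest rate, risky asset with $S_k:=S_{t_k}$ at trading dates $t_0<\dots<t_{K-1}<t_K=T$, $\Delta S_{k+1}=S_{k+1}-S_k$, adapted auxiliary process $Y_k$. Exercise times are stopping times $\tau:\Omega\to\{0,\dots,K\}$ with payoff $F(S_\tau,Y_\tau)=\sum_k\mathbf{1}\{\tau=k\}F_k(S_k,Y_k)$. $\bar{\mathcal{X}}_\tau(p_0)$: wealth processes with $X^\tau_0=p_0$, $X^\tau_{k+1}(\tau)=X^\tau_k(\tau)+(\xi_k\mathbf{1}\{\tau>k\}+\sum_{i=0}^k\hat\xi^i_k\mathbf{1}\{\tau=i\})\Delta S_{k+1}$ for every $\tau$, with $\xi_k,\hat\xi^i_k$ $\mathcal{F}_{t_k}$-measurable. A convex risk measure is monotone, translation invariant, normalized and convex. Define $\varrho^w_\tau(p_0)=\inf_{X^\tau\in\bar{\mathcal{X}}_\tau(p_0)}\sup_\tau\rho^w(F(S_\tau,Y_\tau)-X^\tau_K(\tau))$ and $\varrho^b_\tau(p_0)=\inf_{X^\tau\in\bar{\mathcal{X}}_\tau(-p_0)}\inf_\tau\rho^b(-F(S_\tau,Y_\tau)-X^\tau_K(\tau))$.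 The equal risk price without commitment is the unique $p_0^*$ with $\varrho^w_\tau(p_0^* )=\varrho^b_\tau(p_0^* )\in\mathbb{R}$. *)

theory Defs
  imports "HOL-Probability.Probability"
begin

definition discrete_filtration :: "'a measure \<Rightarrow> (nat \<Rightarrow> 'a measure) \<Rightarrow> nat \<Rightarrow> bool" where
  "discrete_filtration M Fl K \<longleftrightarrow>
     (\<forall>k\<le>K. space (Fl k) = space M) \<and>
     (\<forall>k<K. sets (Fl k) \<subseteq> sets (Fl (Suc k))) \<and>
     sets (Fl K) \<subseteq> sets M"

definition exercise_times :: "'a measure \<Rightarrow> (nat \<Rightarrow> 'a measure) \<Rightarrow> nat \<Rightarrow> ('a \<Rightarrow> nat) set" where
  "exercise_times M Fl K =
     {\<tau>. (\<forall>\<omega>\<in>space M. \<tau> \<omega> \<le> K) \<and> (\<forall>k\<le>K. {\<omega>\<in>space M. \<tau> \<omega> = k} \<in> sets (Fl k))}"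

definition payoff ::
  "(nat \<Rightarrow> real \<Rightarrow> 'y \<Rightarrow> real) \<Rightarrow> (nat \<Rightarrow> 'a \<Rightarrow> real) \<Rightarrow> (nat \<Rightarrow> 'a \<Rightarrow> 'y) \<Rightarrow> ('a \<Rightarrow> nat) \<Rightarrow> 'a \<Rightarrow> real" where
  "payoff F S Y \<tau> \<omega> = F (\<tau> \<omega>) (S (\<tau> \<omega>) \<omega>) (Y (\<tau> \<omega>) \<omega>)"

definition strategies ::
  "(nat \<Rightarrow> 'a measure) \<Rightarrow> nat \<Rightarrow> ((nat \<Rightarrow> 'a \<Rightarrow> real) \<times> (nat \<Rightarrow> nat \<Rightarrow> 'a \<Rightarrow> real)) set" where
  "strategies Fl K =
     {(\<xi>, \<xi>h). (\<forall>k<K. \<xi> k \<in> borel_measurable (Fl k)) \<and>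
               (\<forall>k<K. \<forall>i\<le>k. \<xi>h i k \<in> borel_measurable (Fl k))}"

text \<open>Terminal wealth X^tau_K(tau) of the strategy started from initial wealth p0:
  X_{k+1} = X_k + (xi_k 1{tau>k} + sum_{i\<le>k} xihat^i_k 1{tau=i}) Delta S_{k+1}.\<close>
definition terminal_wealth ::
  "(nat \<Rightarrow> 'a \<Rightarrow> real) \<Rightarrow> nat \<Rightarrow> real \<Rightarrow> (nat \<Rightarrow> 'a \<Rightarrow> real) \<Rightarrow> (nat \<Rightarrow> nat \<Rightarrow> 'a \<Rightarrow> real)
     \<Rightarrow> ('a \<Rightarrow> nat) \<Rightarrow> 'a \<Rightarrow> real" where
  "terminal_wealth S K p0 \<xi> \<xi>h \<tau> \<omega> =
     p0 + (\<Sum>k<K. (\<xi> k \<omega> * (if \<tau> \<omega> > k then 1 else 0)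
                   + (\<Sum>i\<le>k. \<xi>h i k \<omega> * (if \<tau> \<omega> = i then 1 else 0)))
                  * (S (Suc k) \<omega> - S k \<omega>))"

definition wealth_processes ::
  "(nat \<Rightarrow> 'a measure) \<Rightarrow> (nat \<Rightarrow> 'a \<Rightarrow> real) \<Rightarrow> nat \<Rightarrow> real \<Rightarrow> (('a \<Rightarrow> nat) \<Rightarrow> 'a \<Rightarrow> real) set" where
  "wealth_processes Fl S K p0 =
     (\<lambda>(\<xi>, \<xi>h). terminal_wealth S K p0 \<xi> \<xi>h) ` strategies Fl K"

text \<open>Convention: risk measures act on losses (random variables on M): monotone increasing,
  rho(X + m) = rho(X) + m, rho(0) = 0, convex.\<close>
definition convex_risk_measure :: "'a measure \<Rightarrow> (('a \<Rightarrow> real) \<Rightarrow> real) \<Rightarrow> bool" where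
  "convex_risk_measure M \<rho> \<longleftrightarrow>
     (\<forall>X Y. X \<in> borel_measurable M \<longrightarrow> Y \<in> borel_measurable M \<longrightarrow>
            (\<forall>\<omega>\<in>space M. X \<omega> \<le> Y \<omega>) \<longrightarrow> \<rho> X \<le> \<rho> Y) \<and>
     (\<forall>X (m::real). X \<in> borel_measurable M \<longrightarrow> \<rho> (\<lambda>\<omega>. X \<omega> + m) = \<rho> X + m) \<and>
     \<rho> (\<lambda>\<omega>. 0) = 0 \<and>
     (\<forall>X Y (l::real). X \<in> borel_measurable M \<longrightarrow> Y \<in> borel_measurable M \<longrightarrow> 0 \<le> l \<longrightarrow> l \<le> 1 \<longrightarrow>
            \<rho> (\<lambda>\<omega>. l * X \<omega> + (1 - l) * Y \<omega>) \<le> l * \<rho> X + (1 - l) * \<rho> Y)"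

definition writer_risk ::
  "'a measure \<Rightarrow> (nat \<Rightarrow> 'a measure) \<Rightarrow> nat \<Rightarrow> (nat \<Rightarrow> 'a \<Rightarrow> real) \<Rightarrow> (nat \<Rightarrow> 'a \<Rightarrow> 'y)
     \<Rightarrow> (nat \<Rightarrow> real \<Rightarrow> 'y \<Rightarrow> real) \<Rightarrow> (('a \<Rightarrow> real) \<Rightarrow> real) \<Rightarrow> real \<Rightarrow> ereal" where
  "writer_risk M Fl K S Y F \<rho>w p0 =
     (INF X\<in>wealth_processes Fl S K p0. SUP \<tau>\<in>exercise_times M Fl K.
        ereal (\<rho>w (\<lambda>\<omega>. payoff F S Y \<tau> \<omega> - X \<tau> \<omega>)))"

definition buyer_risk ::
  "'a measure \<Rightarrow> (nat \<Rightarrow> 'a measure) \<Rightarrow> nat \<Rightarrow> (nat \<Rightarrow> 'a \<Rightarrow> real) \<Rightarrow> (nat \<Rightarrow> 'a \<Rightarrow> 'y)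
     \<Rightarrow> (nat \<Rightarrow> real \<Rightarrow> 'y \<Rightarrow> real) \<Rightarrow> (('a \<Rightarrow> real) \<Rightarrow> real) \<Rightarrow> real \<Rightarrow> ereal" where
  "buyer_risk M Fl K S Y F \<rho>b p0 =
     (INF X\<in>wealth_processes Fl S K (- p0). INF \<tau>\<in>exercise_times M Fl K.
        ereal (\<rho>b (\<lambda>\<omega>. - payoff F S Y \<tau> \<omega> - X \<tau> \<omega>)))"

definition equal_risk_price ::
  "'a measure \<Rightarrow> (nat \<Rightarrow> 'a measure) \<Rightarrow> nat \<Rightarrow> (nat \<Rightarrow> 'a \<Rightarrow> real) \<Rightarrow> (nat \<Rightarrow> 'a \<Rightarrow> 'y)
     \<Rightarrow> (nat \<Rightarrow> real \<Rightarrow> 'y \<Rightarrow> real) \<Rightarrow> (('a \<Rightarrow> real) \<Rightarrow> real) \<Rightarrow> (('a \<Rightarrow> real) \<Rightarrow> real)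
     \<Rightarrow> real \<Rightarrow> bool" where
  "equal_risk_price M Fl K S Y F \<rho>w \<rho>b p0 \<longleftrightarrow>
     writer_risk M Fl K S Y F \<rho>w p0 = buyer_risk M Fl K S Y F \<rho>b p0 \<and>
     \<bar>writer_risk M Fl K S Y F \<rho>w p0\<bar> \<noteq> \<infinity>"

end

theory Submission
  imports Defs
begin

lemma SUP_add_c: "(SUP i\<in>I. f i + ereal c) = (SUP i\<in>I. f i) + ereal c"
proof (rule antisym)
  show "(SUP i\<in>I. f i + ereal c) \<le> (SUP i\<in>I. f i) + ereal c"
    by (intro SUP_least add_right_mono SUP_upper)
  have "(SUP i\<in>I. f i) \<le> (SUP i\<in>I. f i + ereal c) + ereal (-c)"
  proof (intro SUP_least)
    fix i assume "i \<in> I"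
    have "f i = (f i + ereal c) + ereal (-c)" by (cases "f i") auto
    also have "\<dots> \<le> (SUP i\<in>I. f i + ereal c) + ereal (-c)"
      using \<open>i\<in>I\<close> by (intro add_right_mono SUP_upper)
    finally show "f i \<le> (SUP i\<in>I. f i + ereal c) + ereal (-c)" .
  qed
  then have "(SUP i\<in>I. f i) + ereal c \<le> (SUP i\<in>I. f i + ereal c) + ereal (-c) + ereal c"
    by (rule add_right_mono)
  also have "\<dots> = (SUP i\<in>I. f i + ereal c)" by (cases "(SUP i\<in>I. f i + ereal c)") auto
  finally show "(SUP i\<in>I. f i) + ereal c \<le> (SUP i\<in>I. f i + ereal c)" .
qed
lemma INF_add_c: "(INF i\<in>I. f i + ereal c) = (INF i\<in>I. f i) + ereal c"
proof (rule antisym)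
  show "(INF i\<in>I. f i) + ereal c \<le> (INF i\<in>I. f i + ereal c)"
    by (intro INF_greatest add_right_mono INF_lower)
  have "(INF i\<in>I. f i + ereal c) + ereal (-c) \<le> (INF i\<in>I. f i)"
  proof (intro INF_greatest)
    fix i assume "i \<in> I"
    have "(INF i\<in>I. f i + ereal c) + ereal (-c) \<le> (f i + ereal c) + ereal (-c)"
      using \<open>i\<in>I\<close> by (intro add_right_mono INF_lower)
    also have "\<dots> = f i" by (cases "f i") auto
    finally show "(INF i\<in>I. f i + ereal c) + ereal (-c) \<le> f i" .
  qed
  then have "(INF i\<in>I. f i + ereal c) + ereal (-c) + ereal c \<le> (INF i\<in>I. f i) + ereal c"
    by (rule add_right_mono)
  moreover have "(INF i\<in>I. f i + ereal c) + ereal (-c) + ereal c = (INF i\<in>I. f i + ereal c)" by (cases "(INF i\<in>I. f i + ereal c)") auto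
  ultimately show "(INF i\<in>I. f i + ereal c) \<le> (INF i\<in>I. f i) + ereal c" by simp
qed
lemma filt_sub:
  assumes "discrete_filtration M Fl K" "k \<le> K"
  shows "subalgebra M (Fl k)"
proof -
  have "sets (Fl k) \<subseteq> sets (Fl K)" using assms(2)
  proof (induction rule: dec_induct)
    case base then show ?case by simp
  next
    case (step n) then show ?case using assms(1) unfolding discrete_filtration_def by blast
  qed
  then show ?thesis using assms unfolding discrete_filtration_def subalgebra_def by auto
qed

lemma tau_meas:
  assumes "discrete_filtration M Fl K" "\<tau> \<in> exercise_times M Fl K"
  shows "\<tau> \<in> M \<rightarrow>\<^sub>M count_space {..K}"
  unfolding measurable_count_space_eq2_countable
proof (intro conjI ballI)
  show "\<tau> \<in> space M \<rightarrow> {..K}" using assms(2) unfolding exercise_times_def by auto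
next
  fix a assume a: "a \<in> {..K}"
  have "\<tau> -` {a} \<inter> space M = {\<omega>\<in>space M. \<tau> \<omega> = a}" by auto
  also have "\<dots> \<in> sets (Fl a)" using assms(2) a unfolding exercise_times_def by auto
  finally show "\<tau> -` {a} \<inter> space M \<in> sets M"
    using filt_sub[OF assms(1), of a] a unfolding subalgebra_def by auto
qed

lemma loss_meas:
  assumes filt: "discrete_filtration M Fl K"
    and Sm: "\<forall>k\<le>K. S k \<in> borel_measurable (Fl k)"
    and Fm: "\<forall>k\<le>K. (\<lambda>\<omega>. F k (S k \<omega>) (Y k \<omega>)) \<in> borel_measurable (Fl k)"
    and tau: "\<tau> \<in> exercise_times M Fl K"
    and st: "(\<xi>, \<xi>h) \<in> strategies Fl K"
  shows "(\<lambda>\<omega>. c * payoff F S Y \<tau> \<omega> - terminal_wealth S K p \<xi> \<xi>h \<tau> \<omega>) \<in> borel_measurable M"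
proof -
  have tm: "\<tau> \<in> M \<rightarrow>\<^sub>M count_space {..K}" by (rule tau_meas[OF filt tau])
  have up: "f \<in> borel_measurable M" if "f \<in> borel_measurable (Fl k)" "k \<le> K" for f :: "'a \<Rightarrow> real" and k
    using measurable_from_subalg[OF filt_sub[OF filt that(2)] that(1)] .
  have pm: "(\<lambda>\<omega>. payoff F S Y \<tau> \<omega>) \<in> borel_measurable M"
    unfolding payoff_def
    by (rule measurable_compose_countable'[where f="\<lambda>i \<omega>. F i (S i \<omega>) (Y i \<omega>)", OF _ tm])
       (use Fm in \<open>auto intro: up\<close>)
  have wm: "(\<lambda>\<omega>. terminal_wealth S K p \<xi> \<xi>h \<tau> \<omega>) \<in> borel_measurable M"
  proof -
    have "(\<lambda>\<omega>. terminal_wealth S K p \<xi> \<xi>h (\<lambda>_. \<tau> \<omega>) \<omega>) \<in> borel_measurable M"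
    proof (rule measurable_compose_countable'[where f="\<lambda>j \<omega>. terminal_wealth S K p \<xi> \<xi>h (\<lambda>_. j) \<omega>", OF _ tm])
      fix j :: nat
      have xm: "\<xi> k \<in> borel_measurable M" if "k < K" for k
        using st that unfolding strategies_def by (intro up[of _ k]) auto
      have xhm: "\<xi>h i k \<in> borel_measurable M" if "k < K" "i \<le> k" for k i
        using st that unfolding strategies_def by (intro up[of _ k]) auto
      have sm: "S k \<in> borel_measurable M" if "k \<le> K" for k
        using Sm that by (intro up[of _ k]) auto
      show "(\<lambda>\<omega>. terminal_wealth S K p \<xi> \<xi>h (\<lambda>_. j) \<omega>) \<in> borel_measurable M"
        unfolding terminal_wealth_def
      proof (intro borel_measurable_add borel_measurable_const borel_measurable_sum)
        fix k assume "k \<in> {..<K}"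
        then have k: "k < K" by simp
        have "(\<lambda>x. \<Sum>i\<le>k. \<xi>h i k x * (if j = i then 1 else 0)) \<in> borel_measurable M"
          by (rule borel_measurable_sum) (use xhm k in auto)
        moreover have "(\<lambda>x. S (Suc k) x - S k x) \<in> borel_measurable M"
          using sm k by auto
        moreover have "\<xi> k \<in> borel_measurable M" using xm k by auto
        ultimately show "(\<lambda>x. (\<xi> k x * (if k < j then 1 else 0) + (\<Sum>i\<le>k. \<xi>h i k x * (if j = i then 1 else 0))) * (S (Suc k) x - S k x)) \<in> borel_measurable M"
          by (intro borel_measurable_times borel_measurable_add borel_measurable_const) (auto simp del: borel_measurable_const)
      qed
    qed auto
    then show ?thesis by (simp add: terminal_wealth_def)
  qed
  show ?thesis using pm wm by (intro borel_measurable_diff borel_measurable_times borel_measurable_const)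
qed

lemma final:
  fixes w b :: ereal
  assumes "\<And>p. E p \<longleftrightarrow> (w + ereal (-p) = b + ereal p \<and> \<bar>w + ereal (-p)\<bar> \<noteq> \<infinity>)"
  shows "((\<exists>!p. E p) \<longleftrightarrow> (\<bar>b\<bar> \<noteq> \<infinity> \<and> \<bar>w\<bar> \<noteq> \<infinity>)) \<and>
         (\<forall>p. E p \<longrightarrow> p = (real_of_ereal w - real_of_ereal b) / 2)"
proof (cases w; cases b)
  fix x y assume wb: "w = ereal x" "b = ereal y"
  have Ep: "E p \<longleftrightarrow> p = (x - y) / 2" for p using assms[of p] wb by auto
  have "\<exists>p. E p" using Ep by blast
  then show ?thesis using Ep wb by auto
qed (use assms in auto)
theorem lemma4:
  fixes M :: "'a measure" and Fl :: "nat \<Rightarrow> 'a measure" and K :: nat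
    and S :: "nat \<Rightarrow> 'a \<Rightarrow> real" and Y :: "nat \<Rightarrow> 'a \<Rightarrow> 'y::topological_space"
    and F :: "nat \<Rightarrow> real \<Rightarrow> 'y \<Rightarrow> real"
    and \<rho>w \<rho>b :: "('a \<Rightarrow> real) \<Rightarrow> real"
  assumes "prob_space M"
    and "discrete_filtration M Fl K"
    and "\<forall>k\<le>K. S k \<in> borel_measurable (Fl k)"
    and "\<forall>k\<le>K. Y k \<in> Fl k \<rightarrow>\<^sub>M borel"
    and "\<forall>k\<le>K. (\<lambda>\<omega>. F k (S k \<omega>) (Y k \<omega>)) \<in> borel_measurable (Fl k)"
    and "convex_risk_measure M \<rho>w"
    and "convex_risk_measure M \<rho>b"
  shows "((\<exists>!p. equal_risk_price M Fl K S Y F \<rho>w \<rho>b p) \<longleftrightarrow>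
            (\<bar>buyer_risk M Fl K S Y F \<rho>b 0\<bar> \<noteq> \<infinity> \<and> \<bar>writer_risk M Fl K S Y F \<rho>w 0\<bar> \<noteq> \<infinity>))
       \<and> (\<forall>p. equal_risk_price M Fl K S Y F \<rho>w \<rho>b p \<longrightarrow>
            p = (real_of_ereal (writer_risk M Fl K S Y F \<rho>w 0)
                 - real_of_ereal (buyer_risk M Fl K S Y F \<rho>b 0)) / 2)"
  proof -
  note filt = assms(2) and Sm = assms(3) and Fm = assms(5)
  define A where "A = strategies Fl K"
  define E where "E = exercise_times M Fl K"
  have tw: "terminal_wealth S K p \<xi> \<xi>h \<tau> \<omega> = terminal_wealth S K 0 \<xi> \<xi>h \<tau> \<omega> + p" for p \<xi> \<xi>h \<tau> \<omega>
    unfolding terminal_wealth_def by simp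
  have TIw: "\<And>X m. X \<in> borel_measurable M \<Longrightarrow> \<rho>w (\<lambda>\<omega>. X \<omega> + m) = \<rho>w X + m"
    using assms(6) unfolding convex_risk_measure_def by blast
  have TIb: "\<And>X m. X \<in> borel_measurable M \<Longrightarrow> \<rho>b (\<lambda>\<omega>. X \<omega> + m) = \<rho>b X + m"
    using assms(7) unfolding convex_risk_measure_def by blast
  define Lw where "Lw = (\<lambda>s \<tau>. \<rho>w (\<lambda>\<omega>. 1 * payoff F S Y \<tau> \<omega> - terminal_wealth S K 0 (fst s) (snd s) \<tau> \<omega>))"
  define Lb where "Lb = (\<lambda>s \<tau>. \<rho>b (\<lambda>\<omega>. (-1) * payoff F S Y \<tau> \<omega> - terminal_wealth S K 0 (fst s) (snd s) \<tau> \<omega>))"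
  define W where "W = (INF s\<in>A. SUP \<tau>\<in>E. ereal (Lw s \<tau>))"
  define B where "B = (INF s\<in>A. INF \<tau>\<in>E. ereal (Lb s \<tau>))"
  have wr: "writer_risk M Fl K S Y F \<rho>w p = W + ereal (-p)" for p
  proof -
    have "writer_risk M Fl K S Y F \<rho>w p = (INF s\<in>A. SUP \<tau>\<in>E. ereal (Lw s \<tau>) + ereal (-p))"
      unfolding writer_risk_def wealth_processes_def A_def[symmetric] E_def[symmetric] image_image
    proof (intro INF_cong SUP_cong refl)
      fix s \<tau> assume s: "s \<in> A" and t: "\<tau> \<in> E"
      obtain \<xi> \<xi>h where sp: "s = (\<xi>, \<xi>h)" by (cases s)
      have m: "(\<lambda>\<omega>. 1 * payoff F S Y \<tau> \<omega> - terminal_wealth S K 0 \<xi> \<xi>h \<tau> \<omega>) \<in> borel_measurable M"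
        proof -
          have t': "\<tau> \<in> exercise_times M Fl K" using t unfolding E_def .
          have s': "(\<xi>, \<xi>h) \<in> strategies Fl K" using s unfolding A_def sp .
          show ?thesis by (rule loss_meas[where F=F and S=S and Y=Y and M=M and Fl=Fl and K=K, OF filt Sm Fm t' s'])
        qed
      have "\<rho>w (\<lambda>\<omega>. payoff F S Y \<tau> \<omega> - terminal_wealth S K p \<xi> \<xi>h \<tau> \<omega>)
          = \<rho>w (\<lambda>\<omega>. (1 * payoff F S Y \<tau> \<omega> - terminal_wealth S K 0 \<xi> \<xi>h \<tau> \<omega>) + (-p))"
        unfolding tw[of p] by (simp add: algebra_simps)
      also have "\<dots> = Lw s \<tau> + (-p)" using TIw[OF m, of "-p"] sp Lw_def by simp
      finally show "ereal (\<rho>w (\<lambda>\<omega>. payoff F S Y \<tau> \<omega> - (case s of (\<xi>, \<xi>h) \<Rightarrow> terminal_wealth S K p \<xi> \<xi>h) \<tau> \<omega>))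
          = ereal (Lw s \<tau>) + ereal (-p)" using sp by simp
    qed
    also have "\<dots> = W + ereal (-p)" unfolding W_def SUP_add_c INF_add_c ..
    finally show ?thesis .
  qed
  have br: "buyer_risk M Fl K S Y F \<rho>b p = B + ereal p" for p
  proof -
    have "buyer_risk M Fl K S Y F \<rho>b p = (INF s\<in>A. INF \<tau>\<in>E. ereal (Lb s \<tau>) + ereal p)"
      unfolding buyer_risk_def wealth_processes_def A_def[symmetric] E_def[symmetric] image_image
    proof (intro INF_cong refl)
      fix s \<tau> assume s: "s \<in> A" and t: "\<tau> \<in> E"
      obtain \<xi> \<xi>h where sp: "s = (\<xi>, \<xi>h)" by (cases s)
      have m: "(\<lambda>\<omega>. (-1) * payoff F S Y \<tau> \<omega> - terminal_wealth S K 0 \<xi> \<xi>h \<tau> \<omega>) \<in> borel_measurable M"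
        proof -
          have t': "\<tau> \<in> exercise_times M Fl K" using t unfolding E_def .
          have s': "(\<xi>, \<xi>h) \<in> strategies Fl K" using s unfolding A_def sp .
          show ?thesis by (rule loss_meas[where F=F and S=S and Y=Y and M=M and Fl=Fl and K=K, OF filt Sm Fm t' s'])
        qed
      have "\<rho>b (\<lambda>\<omega>. - payoff F S Y \<tau> \<omega> - terminal_wealth S K (-p) \<xi> \<xi>h \<tau> \<omega>)
          = \<rho>b (\<lambda>\<omega>. ((-1) * payoff F S Y \<tau> \<omega> - terminal_wealth S K 0 \<xi> \<xi>h \<tau> \<omega>) + p)"
        unfolding tw[of "-p"] by (simp add: algebra_simps)
      also have "\<dots> = Lb s \<tau> + p" using TIb[OF m, of p] sp Lb_def by simp
      finally show "ereal (\<rho>b (\<lambda>\<omega>. - payoff F S Y \<tau> \<omega> - (case s of (\<xi>, \<xi>h) \<Rightarrow> terminal_wealth S K (-p) \<xi> \<xi>h) \<tau> \<omega>))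
          = ereal (Lb s \<tau>) + ereal p" using sp by simp
    qed
    also have "\<dots> = B + ereal p" unfolding B_def INF_add_c ..
    finally show ?thesis .
  qed
  have w0: "writer_risk M Fl K S Y F \<rho>w 0 = W" using wr[of 0] by (simp add: zero_ereal_def[symmetric])
  have b0: "buyer_risk M Fl K S Y F \<rho>b 0 = B" using br[of 0] by (simp add: zero_ereal_def[symmetric])
  show ?thesis unfolding w0 b0
    by (rule final) (simp add: equal_risk_price_def wr br)
qed

end
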